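(* Let $A\in\mathbb{R}^{m\times d}$ have the phase retrieval property in $\mathbb{R}^d$. Then there is a Lebesgue measure zero set $N\subset\mathbb{R}^m$ such that for all $b\in\mathbb{R}_+^m\setminus N$, the problem $\min_{x\in\mathbb{R}^d}\|\,|Ax|-b\,\|^2$ has a unique solution up to sign.
   Context: $\|\cdot\|$ is the Euclidean norm, $|Ax|$ the entrywise absolute value, and $\mathbb{R}_+^m$ the nonnegative orthant. $A$ has the phase retrieval property in $\mathbb{R}^d$ if for all $x,y\in\mathbb{R}^d$, $|Ax|=|Ay|$ implies $x=\pm y$. Uniqueness means all minimizers are of the form $\pm x$ for a single $x$. *)

theory Defs
  imports "HOL-Analysis.Analysis"
begin

definition vabs :: "real ^ 'm \<Rightarrow> real ^ 'm" where
  "vabs v = (\<chi> i. \<bar>v $ i\<bar>)"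

definition phase_retrieval :: "real ^ 'd ^ 'm \<Rightarrow> bool" where
  "phase_retrieval A \<longleftrightarrow>
     (\<forall>x y. vabs (A *v x) = vabs (A *v y) \<longrightarrow> x = y \<or> x = - y)"

definition pr_loss :: "real ^ 'd ^ 'm \<Rightarrow> real ^ 'm \<Rightarrow> real ^ 'd \<Rightarrow> real" where
  "pr_loss A b x = (norm (vabs (A *v x) - b))\<^sup>2"

definition pr_minimizer :: "real ^ 'd ^ 'm \<Rightarrow> real ^ 'm \<Rightarrow> real ^ 'd \<Rightarrow> bool" where
  "pr_minimizer A b x \<longleftrightarrow> (\<forall>z. pr_loss A b x \<le> pr_loss A b z)"

end

theory Submission
  imports Defs
begin

lemma quad_negligible:
  fixes K1 K2 :: "real^'m \<Rightarrow> real^'m"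
  assumes l1: "linear K1" and l2: "linear K2" and v: "norm (K1 v)^2 \<noteq> norm (K2 v)^2"
  shows "negligible {b. norm (K1 b)^2 = norm (K2 b)^2}"
proof -
  define q where "q b = K1 b \<bullet> K1 b - K2 b \<bullet> K2 b" for b
  define a where "a = q v"
  have a: "a \<noteq> 0" using v by (simp add: a_def q_def power2_norm_eq_inner)
  have v0: "v \<noteq> 0" using a l1 l2 by (auto simp: a_def q_def linear_0)
  define \<beta> where "\<beta> w = K1 w \<bullet> K1 v - K2 w \<bullet> K2 v" for w
  define D where "D w = (\<beta> w)^2 - a * q w" for w
  have expand: "q (w + t *\<^sub>R v) = q w + 2 * t * \<beta> w + t^2 * a" for w t
    by (simp add: q_def \<beta>_def a_def linear_add[OF l1] linear_add[OF l2] linear_scale[OF l1]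
        linear_scale[OF l2] inner_add_left inner_add_right inner_commute algebra_simps power2_eq_square)
  define H where "H = {w. v \<bullet> w = 0}"
  have H: "negligible H" unfolding H_def using negligible_hyperplane v0 by blast
  define f where "f \<sigma> w = w + ((- \<beta> w + \<sigma> * sqrt (D w)) / a) *\<^sub>R v" for \<sigma> w
  define g where "g w = w - (\<beta> w / a) *\<^sub>R v" for w
  have sub: "{b. norm (K1 b)^2 = norm (K2 b)^2} \<subseteq> f 1 ` (H \<inter> {w. D w > 0}) \<union> f (-1) ` (H \<inter> {w. D w > 0}) \<union> g ` H"
  proof
    fix b assume "b \<in> {b. norm (K1 b)^2 = norm (K2 b)^2}"
    hence qb: "q b = 0" by (simp add: q_def power2_norm_eq_inner)
    define t where "t = (v \<bullet> b) / (v \<bullet> v)"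
    define w where "w = b - t *\<^sub>R v"
    have wH: "w \<in> H" using v0 by (simp add: H_def w_def t_def inner_diff_right)
    have b: "b = w + t *\<^sub>R v" by (simp add: w_def)
    have eq: "q w + 2 * t * \<beta> w + t^2 * a = 0" using expand qb b by metis
    have "(a*t+\<beta> w)^2 = a*(q w + 2*t*\<beta> w + t^2*a) + D w"
      by (simp add: D_def power2_eq_square algebra_simps)
    hence sq: "(a*t+\<beta> w)^2 = D w" using eq by simp
    hence Dge: "D w \<ge> 0" by (metis zero_le_power2)
    have "sqrt (D w) = \<bar>a*t+\<beta> w\<bar>" using sq by (metis real_sqrt_abs)
    hence "a*t + \<beta> w = sqrt (D w) \<or> a*t + \<beta> w = - sqrt (D w)" by linarith
    hence tt: "t = (- \<beta> w + sqrt (D w))/a \<or> t = (- \<beta> w + (-1) * sqrt (D w))/a"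
      using a by (auto simp: field_simps)
    show "b \<in> f 1 ` (H \<inter> {w. D w > 0}) \<union> f (-1) ` (H \<inter> {w. D w > 0}) \<union> g ` H"
    proof (cases "D w = 0")
      case True
      hence "t = - \<beta> w / a" using tt by auto
      hence "b = g w" using b by (simp add: g_def)
      then show ?thesis using wH by blast
    next
      case False
      hence "D w > 0" using Dge by simp
      moreover have "b = f 1 w \<or> b = f (-1) w" using tt b by (auto simp: f_def)
      ultimately show ?thesis using wH by blast
    qed
  qed
  have dK1: "(K1 has_derivative K1) F" for F using l1 linear_imp_has_derivative by blast
  have dK2: "(K2 has_derivative K2) F" for F using l2 linear_imp_has_derivative by blast
  have df: "f \<sigma> differentiable_on (H \<inter> {w. D w > 0})" for \<sigma>
    unfolding differentiable_on_def differentiable_def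
  proof
    fix w assume "w \<in> H \<inter> {w. D w > 0}"
    hence Dw: "D w > 0" by simp
    show "\<exists>D'. (f \<sigma> has_derivative D') (at w within H \<inter> {w. 0 < D w})"
      unfolding f_def D_def \<beta>_def q_def
      apply (rule exI)
      apply (rule derivative_intros dK1 dK2 a Dw[unfolded D_def \<beta>_def q_def])+
      done
  qed
  have dg: "g differentiable_on H"
    unfolding differentiable_on_def differentiable_def
  proof
    fix w assume "w \<in> H"
    show "\<exists>D'. (g has_derivative D') (at w within H)"
      unfolding g_def \<beta>_def
      apply (rule exI)
      apply (rule derivative_intros dK1 dK2 a)+
      done
  qed
  have n1: "negligible (f \<sigma> ` (H \<inter> {w. D w > 0}))" for \<sigma>
    by (rule negligible_differentiable_image_negligible[OF order_refl _ df])
       (rule negligible_subset[OF H], blast)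
  have n2: "negligible (g ` H)"
    by (rule negligible_differentiable_image_negligible[OF order_refl H dg])
  show ?thesis
    by (rule negligible_subset[OF _ sub]) (use n1 n2 in auto)
qed


definition sg :: "('m \<Rightarrow> bool) \<Rightarrow> 'm \<Rightarrow> real" where
  "sg f i = (if f i then 1 else -1)"
definition Bm :: "real^'d^'m \<Rightarrow> ('m \<Rightarrow> bool) \<Rightarrow> real^'d^'m" where
  "Bm A f = (\<chi> i j. sg f i * A$i$j)"
definition Gm :: "real^'d^'m \<Rightarrow> ('m \<Rightarrow> bool) \<Rightarrow> real^'d^'d" where
  "Gm A f = transpose (Bm A f) ** Bm A f"
definition Lm :: "real^'d^'m \<Rightarrow> ('m \<Rightarrow> bool) \<Rightarrow> real^'m^'d" where
  "Lm A f = matrix_inv (Gm A f) ** transpose (Bm A f)"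
definition Km :: "real^'d^'m \<Rightarrow> ('m \<Rightarrow> bool) \<Rightarrow> real^'m^'m" where
  "Km A f = Bm A f ** Lm A f - mat 1"
definition phi :: "real^'d^'m \<Rightarrow> ('m \<Rightarrow> bool) \<Rightarrow> real^'m \<Rightarrow> real" where
  "phi A f b = norm (Km A f *v b)^2"

lemma Bm_mult: "Bm A f *v x = (\<chi> i. sg f i * (A *v x)$i)"
  by (simp add: Bm_def matrix_vector_mult_def sum_distrib_left mult.assoc vec_eq_iff)

lemma inner_transpose: "inner (M *v z) y = inner z (transpose M *v (y::real^_))"
  by (metis dot_lmul_matrix vector_transpose_matrix)

lemma inj_A:
  assumes "phase_retrieval A" "A *v z = 0" shows "z = 0"
proof -
  have "vabs (A *v z) = vabs (A *v 0)" using assms(2) by simp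
  thus ?thesis using assms(1) unfolding phase_retrieval_def by fastforce
qed

lemma Bm_inj:
  assumes "phase_retrieval A" "Bm A f *v z = 0" shows "z = 0"
proof -
  have "(A *v z) $ i = 0" for i
  proof -
    have "sg f i * (A *v z) $ i = 0" using assms(2) by (simp add: Bm_mult vec_eq_iff)
    moreover have "sg f i \<noteq> 0" by (simp add: sg_def)
    ultimately show ?thesis by simp
  qed
  hence "A *v z = 0" by (simp add: vec_eq_iff)
  thus ?thesis using inj_A assms(1) by blast
qed

lemma G_inv:
  assumes "phase_retrieval A"
  shows "Gm A f ** matrix_inv (Gm A f) = mat 1"
proof -
  let ?B = "Bm A f" and ?G = "Gm A f"
  have Gz: "?G *v z = transpose ?B *v (?B *v z)" for z
    by (simp add: Gm_def matrix_vector_mul_assoc)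
  have "inj ((*v) ?G)"
  proof (rule injI)
    fix x y assume "?G *v x = ?G *v y"
    hence "?G *v (x - y) = 0" by (simp add: matrix_vector_mult_diff_distrib)
    hence "inner (?B *v (x - y)) (?B *v (x - y)) = 0"
      by (simp add: inner_transpose Gz)
    hence "?B *v (x - y) = 0" by simp
    thus "x = y" using Bm_inj[OF assms] by fastforce
  qed
  hence "invertible ?G" using matrix_left_invertible_injective invertible_left_inverse by blast
  hence "\<exists>A'. ?G ** A' = mat 1 \<and> A' ** ?G = mat 1" by (simp add: invertible_def)
  from someI_ex[OF this] show ?thesis by (simp add: matrix_inv_def)
qed

lemma key:
  assumes "phase_retrieval A"
  shows "norm (Bm A f *v x - b)^2 = norm (Bm A f *v (x - Lm A f *v b))^2 + phi A f b"
proof -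
  let ?B = "Bm A f" and ?L = "Lm A f"
  define r where "r = ?B *v (?L *v b) - b"
  have r: "r = Km A f *v b"
    by (simp add: r_def Km_def matrix_vector_mult_diff_rdistrib matrix_vector_mul_assoc)
  have "transpose ?B *v r = (Gm A f ** matrix_inv (Gm A f)) *v (transpose ?B *v b) - transpose ?B *v b"
    by (simp add: r_def Lm_def Gm_def matrix_vector_mult_diff_distrib matrix_vector_mul_assoc matrix_mul_assoc del: transpose_matrix_vector)
  hence Br: "transpose ?B *v r = 0" using G_inv[OF assms] by simp
  have "?B *v x - b = ?B *v (x - ?L *v b) + r"
    by (simp add: r_def matrix_vector_mult_diff_distrib)
  hence "norm (?B *v x - b)^2 = norm (?B *v (x - ?L *v b))^2 + norm r ^2 + 2 * inner (?B *v (x - ?L *v b)) r"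
    by (simp add: power2_norm_eq_inner inner_add_left inner_add_right inner_commute)
  also have "inner (?B *v (x - ?L *v b)) r = 0" by (simp add: inner_transpose Br del: transpose_matrix_vector)
  finally show ?thesis by (simp add: phi_def r)
qed

lemma key_le:
  assumes "phase_retrieval A"
  shows "phi A f b \<le> norm (Bm A f *v x - b)^2"
  using key[OF assms] by simp

lemma key_eq:
  assumes "phase_retrieval A" "norm (Bm A f *v x - b)^2 \<le> phi A f b"
  shows "x = Lm A f *v b"
proof -
  have "norm (Bm A f *v (x - Lm A f *v b))^2 = 0" using key[OF assms(1), of f x b] assms(2) by simp
  hence "Bm A f *v (x - Lm A f *v b) = 0" by simp
  hence "x - Lm A f *v b = 0" using Bm_inj[OF assms(1)] by blast
  thus ?thesis by simp
qed

lemma key_val: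
  assumes "phase_retrieval A"
  shows "norm (Bm A f *v (Lm A f *v b) - b)^2 = phi A f b"
  using key[OF assms, of f "Lm A f *v b" b] by simp


definition pat :: "real^'d^'m \<Rightarrow> real^'d \<Rightarrow> 'm \<Rightarrow> bool" where
  "pat A x = (\<lambda>i. 0 \<le> (A *v x) $ i)"

lemma Bm_pat: "Bm A (pat A x) *v x = vabs (A *v x)"
  by (simp add: Bm_mult sg_def pat_def vabs_def vec_eq_iff)

lemma loss_le:
  assumes "\<forall>i. 0 \<le> b $ i"
  shows "pr_loss A b z \<le> norm (Bm A f *v z - b)^2"
proof -
  have "(\<Sum>i\<in>UNIV. (\<bar>(A *v z) $ i\<bar> - b $ i)^2) \<le> (\<Sum>i\<in>UNIV. (sg f i * (A *v z) $ i - b $ i)^2)"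
  proof (rule sum_mono)
    fix i
    let ?a = "(A *v z) $ i" and ?c = "b $ i" and ?s = "sg f i"
    have s2: "?s * ?s = 1" by (simp add: sg_def)
    have "?s * ?a \<le> \<bar>?a\<bar>" by (auto simp: sg_def)
    hence m: "?c * (?s * ?a) \<le> ?c * \<bar>?a\<bar>" using assms by (simp add: mult_left_mono)
    have e1: "(\<bar>?a\<bar> - ?c)^2 = ?a * ?a - 2 * (?c * \<bar>?a\<bar>) + ?c * ?c"
      by (simp add: power2_eq_square algebra_simps)
    have e2: "(?s * ?a - ?c)^2 = (?s * ?s) * (?a * ?a) - 2 * (?c * (?s * ?a)) + ?c * ?c"
      by (simp add: power2_eq_square algebra_simps)
    show "(\<bar>?a\<bar> - ?c)^2 \<le> (?s * ?a - ?c)^2"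
      unfolding e1 e2 s2 using m by linarith
  qed
  moreover have nsq: "norm (v::real^'m)^2 = (\<Sum>i\<in>UNIV. (v$i)^2)" for v
    unfolding power2_norm_eq_inner inner_vec_def by (simp add: power2_eq_square)
  ultimately show ?thesis
    by (simp add: pr_loss_def nsq Bm_mult vabs_def)
qed

theorem theorem4p1:
  fixes A :: "real ^ 'd ^ 'm"
  assumes "phase_retrieval A"
  shows "\<exists>N :: (real ^ 'm) set. N \<in> null_sets lebesgue \<and>
           (\<forall>b. (\<forall>i. 0 \<le> b $ i) \<and> b \<notin> N \<longrightarrow>
              (\<exists>x. pr_minimizer A b x \<and>
                   (\<forall>y. pr_minimizer A b y \<longrightarrow> y = x \<or> y = - x)))"
proof -
  note pr = assms
  define P where "P = {(f, g). \<exists>v. phi A f v \<noteq> phi A g v}"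
  define N where "N = (\<Union>(f, g)\<in>P. {b. phi A f b = phi A g b})"
  have "negligible N"
    unfolding N_def
  proof (rule negligible_Union)
    show "finite ((\<lambda>(f, g). {b. phi A f b = phi A g b}) ` P)" by simp
  next
    fix T assume "T \<in> (\<lambda>(f, g). {b. phi A f b = phi A g b}) ` P"
    then obtain f g v where T: "T = {b. phi A f b = phi A g b}" and v: "phi A f v \<noteq> phi A g v"
      by (auto simp: P_def)
    have "negligible {b. norm ((\<lambda>b. Km A f *v b) b)^2 = norm ((\<lambda>b. Km A g *v b) b)^2}"
      by (rule quad_negligible) (use v in \<open>auto simp: phi_def\<close>)
    thus "negligible T" by (simp add: T phi_def)
  qed
  hence N0: "N \<in> null_sets lebesgue" by (simp add: negligible_iff_null_sets)
  show ?thesis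
  proof (rule exI[of _ N], intro conjI allI impI)
    show "N \<in> null_sets lebesgue" by (rule N0)
    fix b :: "real^'m" assume asm: "(\<forall>i. 0 \<le> b $ i) \<and> b \<notin> N"
    hence bpos: "\<forall>i. 0 \<le> b $ i" and bN: "b \<notin> N" by auto
    define \<mu> where "\<mu> = Min (range (\<lambda>f. phi A f b))"
    have "\<mu> \<in> range (\<lambda>f. phi A f b)" unfolding \<mu>_def by (rule Min_in) auto
    then obtain f0 where f0: "phi A f0 b = \<mu>" by auto
    have \<mu>le: "\<mu> \<le> phi A g b" for g by (simp add: \<mu>_def)
    define x0 where "x0 = Lm A f0 *v b"
    have lossge: "\<mu> \<le> pr_loss A b z" for z
    proof -
      have "\<mu> \<le> phi A (pat A z) b" by (rule \<mu>le)
      also have "\<dots> \<le> norm (Bm A (pat A z) *v z - b)^2" by (rule key_le[OF pr])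
      also have "\<dots> = pr_loss A b z" by (simp add: Bm_pat pr_loss_def)
      finally show ?thesis .
    qed
    have x0le: "pr_loss A b x0 \<le> \<mu>"
      using loss_le[OF bpos, of A x0 f0] key_val[OF pr, of f0 b] f0 by (simp add: x0_def)
    have x0min: "pr_minimizer A b x0"
      unfolding pr_minimizer_def using x0le lossge order_trans by blast
    have minchar: "pr_loss A b y = \<mu> \<and> phi A (pat A y) b = \<mu> \<and> y = Lm A (pat A y) *v b"
      if "pr_minimizer A b y" for y
    proof -
      have ly: "pr_loss A b y = \<mu>" using that x0le lossge[of y] unfolding pr_minimizer_def
        by (meson order_antisym order_trans)
      have e: "norm (Bm A (pat A y) *v y - b)^2 = \<mu>" using ly by (simp add: Bm_pat pr_loss_def)
      have ph: "phi A (pat A y) b = \<mu>" using \<mu>le[of "pat A y"] key_le[OF pr, of "pat A y" b y] e by simp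
      have "y = Lm A (pat A y) *v b" by (rule key_eq[OF pr]) (use e ph in simp)
      with ly ph show ?thesis by blast
    qed
    show "\<exists>x. pr_minimizer A b x \<and> (\<forall>y. pr_minimizer A b y \<longrightarrow> y = x \<or> y = - x)"
    proof (intro exI conjI allI impI)
      show "pr_minimizer A b x0" by (rule x0min)
      fix y assume ymin: "pr_minimizer A b y"
      define f where "f = pat A x0"
      define g where "g = pat A y"
      have cx: "pr_loss A b x0 = \<mu>" "phi A f b = \<mu>" "x0 = Lm A f *v b"
        using minchar[OF x0min] by (auto simp: f_def)
      have cy: "pr_loss A b y = \<mu>" "phi A g b = \<mu>" "y = Lm A g *v b"
        using minchar[OF ymin] by (auto simp: g_def)
      have "(f, g) \<notin> P"
      proof
        assume "(f, g) \<in> P"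
        moreover have "b \<in> {b. phi A f b = phi A g b}" using cx(2) cy(2) by simp
        ultimately have "b \<in> N" unfolding N_def by (intro UN_I[of "(f, g)"]) simp_all
        thus False using bN by simp
      qed
      hence same: "phi A f c = phi A g c" for c by (auto simp: P_def)
      define c where "c = Bm A g *v y"
      have cvabs: "c = vabs (A *v y)" by (simp add: c_def g_def Bm_pat)
      have "phi A g c \<le> norm (Bm A g *v y - c)^2" by (rule key_le[OF pr])
      hence "phi A g c \<le> 0" by (simp add: c_def)
      hence "phi A f c \<le> 0" using same by simp
      hence "phi A f c \<le> norm (Bm A f *v (Lm A f *v c) - c)^2" using key_le[OF pr] by simp
      have cz: "c = Bm A f *v (Lm A f *v c)"
      proof -
        have "norm (Bm A f *v (Lm A f *v c) - c)^2 = phi A f c" by (rule key_val[OF pr])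
        with \<open>phi A f c \<le> 0\<close> have "norm (Bm A f *v (Lm A f *v c) - c)^2 \<le> 0" by simp
        hence "norm (Bm A f *v (Lm A f *v c) - c) = 0" by simp
        thus ?thesis by simp
      qed
      have "norm (Bm A f *v (Lm A f *v c) - b)^2 = \<mu>"
        using cy(1) cz by (simp add: pr_loss_def cvabs)
      hence "Lm A f *v c = Lm A f *v b" using cx(2) by (intro key_eq[OF pr]) simp
      hence "c = Bm A f *v x0" using cz cx(3) by simp
      hence "vabs (A *v x0) = vabs (A *v y)" using cvabs by (simp add: f_def Bm_pat)
      hence "x0 = y \<or> x0 = - y" using pr unfolding phase_retrieval_def by blast
      thus "y = x0 \<or> y = - x0" by auto
    qed
  qed
qed

end
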